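(* There exists a dense subset $P \subseteq \mathbb{R}$ such that neither the difference set $P-P=\{x-y : x,y\in P\}$ nor the difference set $P^c-P^c=\{x-y : x,y\in \mathbb{R}\setminus P\}$ contains any interval of $\mathbb{R}$ of positive length.
   Context: $P^c=\mathbb{R}\setminus P$ denotes the complement of $P$ in $\mathbb{R}$. *)

theory Defs
  imports "HOL-Analysis.Analysis"
begin

end

theory Submission
  imports Defs
begin

definition qs :: "rat \<Rightarrow> real \<Rightarrow> real" where "qs q x = real_of_rat q * x"

lemma vs_qs: "vector_space qs"
  by unfold_locales (auto simp: qs_def algebra_simps of_rat_add of_rat_mult)

lemma pos_irrat: "\<exists>t::real. t > 0 \<and> t \<notin> \<rat>"
proof -
  have "\<not> (UNIV::real set) \<subseteq> \<rat>"
    using uncountable_UNIV_real countable_rat countable_subset by blast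
  then obtain t :: real where t: "t \<notin> \<rat>" by blast
  hence "t \<noteq> 0" by auto
  show ?thesis
  proof (cases "t > 0")
    case True thus ?thesis using t by blast
  next
    case False
    hence "-t > 0" using \<open>t \<noteq> 0\<close> by simp
    moreover have "-t \<notin> \<rat>" using t Rats_minus_iff by blast
    ultimately show ?thesis by blast
  qed
qed

lemma exists_f: "\<exists>(f::real\<Rightarrow>real) t. t > 0 \<and> f 1 = 1 \<and> f t = 0 \<and>
   (\<forall>x y. f (x - y) = f x - f y) \<and> (\<forall>q x. f (real_of_rat q * x) = real_of_rat q * f x)"
proof -
  interpret V: vector_space qs by (rule vs_qs)
  interpret P: vector_space_pair qs qs by unfold_locales
  obtain t :: real where t: "t > 0" "t \<notin> \<rat>" using pos_irrat by blast
  have sp: "V.span {1} = range (\<lambda>k. real_of_rat k)"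
    unfolding V.span_singleton qs_def by simp
  have "t \<notin> V.span {1}" using t(2) unfolding sp Rats_def by auto
  moreover have "V.independent {1::real}"
    by (rule V.independent_insertI) (auto simp: V.span_empty V.independent_empty)
  ultimately have ind: "V.independent {t, 1}" by (rule V.independent_insertI)
  have t1: "t \<noteq> 1" using t(2) by auto
  define g where "g = (\<lambda>x::real. if x = 1 then 1 else (0::real))"
  define f where "f = P.construct {t, 1} g"
  interpret L: Vector_Spaces.linear qs qs f unfolding f_def by (rule P.linear_construct[OF ind])
  have "f 1 = 1" unfolding f_def using P.construct_basis[OF ind, of 1 g] by (simp add: g_def)
  moreover have "f t = 0" unfolding f_def using P.construct_basis[OF ind, of t g] t1 by (simp add: g_def)
  moreover have "\<forall>x y. f (x - y) = f x - f y" using L.diff by blast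
  moreover have "\<forall>q x. f (real_of_rat q * x) = real_of_rat q * f x"
    using L.scale unfolding qs_def by blast
  ultimately show ?thesis using t(1) by blast
qed

theorem mainTheorem1:
  shows "\<exists>P :: real set. closure P = UNIV \<and>
     (\<forall>a b. a < b \<longrightarrow> \<not> {a..b} \<subseteq> {x - y | x y. x \<in> P \<and> y \<in> P}) \<and>
     (\<forall>a b. a < b \<longrightarrow> \<not> {a..b} \<subseteq> {x - y | x y. x \<in> - P \<and> y \<in> - P})"
proof -
  obtain f :: "real \<Rightarrow> real" and t where t: "t > 0" and f1: "f 1 = 1" and ft: "f t = 0"
    and fd: "\<And>x y. f (x - y) = f x - f y" and fs: "\<And>q x. f (real_of_rat q * x) = real_of_rat q * f x"
    using exists_f by blast
  define P where "P = {x. even \<lfloor>f x\<rfloor>}"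
  have key: "f (x - y) \<noteq> 1" if "even \<lfloor>f x\<rfloor> = even \<lfloor>f y\<rfloor>" for x y
  proof
    assume "f (x - y) = 1"
    hence "f x = f y + 1" using fd[of x y] by simp
    hence "\<lfloor>f x\<rfloor> = \<lfloor>f y\<rfloor> + 1" by simp
    thus False using that by simp
  qed
  have hit: "\<exists>z\<in>{a..b}. f z = 1" if ab: "a < b" for a b
  proof -
    obtain r where r: "r \<in> \<rat>" "(a - 1) / t < r" "r < (b - 1) / t"
      using Rats_dense_in_real[of "(a-1)/t" "(b-1)/t"] divide_strict_right_mono[of "a-1" "b-1" t] ab t by auto
    obtain q where q: "r = real_of_rat q" using r(1) Rats_cases by blast
    have "a - 1 < r * t" "r * t < b - 1" using r t by (auto simp: field_simps)
    moreover have "f (1 + r * t) = 1"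
    proof -
      have z: "f 0 = 0" using fd[of 0 0] by simp
      have rt: "f (r*t) = 0" using fs[of q t] q ft by simp
      have "f (- (r*t)) = 0" using fd[of 0 "r*t"] z rt by simp
      moreover have "f (1 + r*t) = f 1 - f (-(r*t))" using fd[of 1 "-(r*t)"] by simp
      ultimately show ?thesis using f1 by simp
    qed
    ultimately show ?thesis by (intro bexI[of _ "1 + r*t"]) auto
  qed
  have "closure P = UNIV"
  proof (rule set_eqI, simp add: closure_approachable, intro allI impI)
    fix x e :: real assume e: "0 < e"
    obtain r where r: "r \<in> \<rat>" "(x - e) / t < r" "r < (x + e) / t"
      using Rats_dense_in_real[of "(x-e)/t" "(x+e)/t"] divide_strict_right_mono[of "x-e" "x+e" t] e t by auto
    obtain q where q: "r = real_of_rat q" using r(1) Rats_cases by blast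
    have "x - e < r * t" "r * t < x + e" using r t by (auto simp: field_simps)
    moreover have "f (r * t) = 0" using fs[of q t] q ft by simp
    ultimately show "\<exists>y\<in>P. dist y x < e" unfolding P_def dist_real_def
      by (intro bexI[of _ "r*t"]) auto
  qed
  moreover have "\<not> {a..b} \<subseteq> {x - y | x y. x \<in> P \<and> y \<in> P}" if ab: "a < b" for a b
  proof
    assume s: "{a..b} \<subseteq> {x - y | x y. x \<in> P \<and> y \<in> P}"
    obtain z where "z \<in> {a..b}" "f z = 1" using hit[OF ab] by blast
    then obtain x y where "z = x - y" "x \<in> P" "y \<in> P" using s by blast
    thus False using key[of x y] \<open>f z = 1\<close> unfolding P_def by auto
  qed
  moreover have "\<not> {a..b} \<subseteq> {x - y | x y. x \<in> - P \<and> y \<in> - P}" if ab: "a < b" for a b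
  proof
    assume s: "{a..b} \<subseteq> {x - y | x y. x \<in> - P \<and> y \<in> - P}"
    obtain z where "z \<in> {a..b}" "f z = 1" using hit[OF ab] by blast
    then obtain x y where "z = x - y" "x \<in> - P" "y \<in> - P" using s by blast
    thus False using key[of x y] \<open>f z = 1\<close> unfolding P_def by auto
  qed
  ultimately show ?thesis by blast
qed

end
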